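(* Let $n\ge2$ and $\lambda=(\lambda_1\ge\dots\ge\lambda_n)$ be a partition. Then \[ \bigl[\pi^{(\beta)}_{c_{n-1}}x^\lambda\bigr]_\lambda\in\operatorname{Ker}\pi^{(\beta)}_{c_1\cdots c_{n-2}}, \] where $\pi^{(\beta)}_{c_{n-1}}x^\lambda=\pi_{n-1}^{(\beta)}\cdots\pi_2^{(\beta)}\pi_1^{(\beta)}(x_1^{\lambda_1}\cdots x_n^{\lambda_n})$ and $\pi^{(\beta)}_{c_1\cdots c_{n-2}}$ is the operator associated with the longest element $c_1c_2\cdots c_{n-2}$ of the subgroup $\langle s_1,\dots,s_{n-2}\rangle\subset S_n$ (the identity operator if $n=2$).
   Context: Demazure--Lascoux operators on $\mathbb{Z}[\beta][x_1,\dots,x_n]$: $\pi_i^{(\beta)}(f)=\partial_i(x_if+\beta x_ix_{i+1}f)$, where $\partial_i f=(f-s_if)/(x_i-x_{i+1})$ and $s_if$ swaps $x_i,x_{i+1}$. They satisfy the braid relations, so for a permutation $v$ with reduced word $s_{j_1}\cdots s_{j_m}$ the composition $\pi^{(\beta)}_{j_1}\circ\dots\circ\pi^{(\beta)}_{j_m}$ does not depend on the reduced word; for the longest element of $\langle s_1,\dots,s_{n-2}\rangle$ (an involution) it also equals the composition taken in the reverse order, and this is $\pi^{(\beta)}_{c_1\cdots c_{n-2}}$. Here $c_k=s_k s_{k-1}\cdots s_1$. A monomial $\beta^mx_1^{\mu_1}\cdots x_n^{\mu_n}$ is $\lambda$-alternating if $\lambda_1\ge\mu_1\ge\lambda_2\ge\mu_2\ge\dots\ge\lambda_{n-1}\ge\mu_{n-1}\ge\lambda_n$,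 and $\lambda$-nonalternating otherwise. For a polynomial $p$, $[p]_\lambda$ denotes the sum of all $\lambda$-nonalternating terms of $p$ (with their coefficients). *)

theory Defs
  imports Main "HOL-Library.Poly_Mapping"
begin

text \<open>Polynomials in Z[beta][x_1,x_2,...]: finitely supported maps from monomials
(exponent vectors nat =>0 nat) to int.  Variable 0 is beta, variable i >= 1 is x_i.\<close>

type_synonym bpoly = "(nat \<Rightarrow>\<^sub>0 nat) \<Rightarrow>\<^sub>0 int"

definition var :: "nat \<Rightarrow> bpoly" where
  "var k = Poly_Mapping.single (Poly_Mapping.single k 1) 1"

abbreviation beta :: bpoly where "beta \<equiv> var 0"

definition swap_mon :: "nat \<Rightarrow> (nat \<Rightarrow>\<^sub>0 nat) \<Rightarrow> (nat \<Rightarrow>\<^sub>0 nat)" where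
  "swap_mon i m = Abs_poly_mapping (\<lambda>k. Poly_Mapping.lookup m ((id(i := Suc i, Suc i := i)) k))"

definition swap_var :: "nat \<Rightarrow> bpoly \<Rightarrow> bpoly" where
  "swap_var i f = Abs_poly_mapping (\<lambda>m. Poly_Mapping.lookup f (swap_mon i m))"

definition ddiff :: "nat \<Rightarrow> bpoly \<Rightarrow> bpoly" where
  "ddiff i f = (THE q. q * (var i - var (Suc i)) = f - swap_var i f)"

definition dl_pi :: "nat \<Rightarrow> bpoly \<Rightarrow> bpoly" where
  "dl_pi i f = ddiff i (var i * f + beta * var i * var (Suc i) * f)"

definition dl_word :: "nat list \<Rightarrow> bpoly \<Rightarrow> bpoly" where
  "dl_word ws f = foldr dl_pi ws f"

text \<open>Reduced word of c_1 c_2 ... c_(n-2), with c_k = s_k s_(k-1) ... s_1.\<close>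
definition w0_word :: "nat \<Rightarrow> nat list" where
  "w0_word n = concat (map (\<lambda>k. rev [1..<Suc k]) [1..<n - 1])"

definition c_word :: "nat \<Rightarrow> nat list" where
  "c_word k = rev [1..<Suc k]"

definition xmon :: "nat \<Rightarrow> (nat \<Rightarrow> nat) \<Rightarrow> bpoly" where
  "xmon n lam = (\<Prod>k = 1..n. var k ^ lam k)"

definition alternating :: "nat \<Rightarrow> (nat \<Rightarrow> nat) \<Rightarrow> (nat \<Rightarrow>\<^sub>0 nat) \<Rightarrow> bool" where
  "alternating n lam m \<longleftrightarrow> (\<forall>j \<in> {1..<n}. lam (Suc j) \<le> Poly_Mapping.lookup m j \<and> Poly_Mapping.lookup m j \<le> lam j)"

definition nonalt_part :: "nat \<Rightarrow> (nat \<Rightarrow> nat) \<Rightarrow> bpoly \<Rightarrow> bpoly" where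
  "nonalt_part n lam p = Abs_poly_mapping (\<lambda>m. if alternating n lam m then 0 else Poly_Mapping.lookup p m)"

end

theory Submission
  imports Defs
begin

abbreviation mon :: "(nat \<Rightarrow>\<^sub>0 nat) \<Rightarrow> bpoly" where "mon m \<equiv> Poly_Mapping.single m (1::int)"

definition tau :: "nat \<Rightarrow> nat \<Rightarrow> nat" where "tau i = id(i := Suc i, Suc i := i)"

lemma tau_tau[simp]: "tau i (tau i k) = k"
  by (simp add: tau_def)

lemma tau_eq_iff: "tau i k = k' \<longleftrightarrow> k = tau i k'"
  by (auto simp: tau_def)

lemma lookup_swap_mon: "Poly_Mapping.lookup (swap_mon i m) k = Poly_Mapping.lookup m (tau i k)"
proof -
  have "{k. Poly_Mapping.lookup m (tau i k) \<noteq> 0} \<subseteq> tau i ` Poly_Mapping.keys m"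
  proof
    fix k assume "k \<in> {k. Poly_Mapping.lookup m (tau i k) \<noteq> 0}"
    hence "tau i k \<in> Poly_Mapping.keys m" by (simp add: in_keys_iff)
    moreover have "k = tau i (tau i k)" by simp
    ultimately show "k \<in> tau i ` Poly_Mapping.keys m" by blast
  qed
  hence "finite {k. Poly_Mapping.lookup m (tau i k) \<noteq> 0}"
    by (rule finite_subset[OF _ finite_imageI[OF finite_keys]])
  hence fin: "finite {k. Poly_Mapping.lookup m ((id(i := Suc i, Suc i := i)) k) \<noteq> 0}"
    unfolding tau_def .
  show ?thesis unfolding swap_mon_def lookup_Abs_poly_mapping[OF fin] tau_def ..
qed

lemma swap_mon_swap_mon[simp]: "swap_mon i (swap_mon i m) = m"
  by (rule poly_mapping_eqI) (simp add: lookup_swap_mon)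

lemma swap_mon_add: "swap_mon i (a + b) = swap_mon i a + swap_mon i b"
  by (rule poly_mapping_eqI) (simp add: lookup_swap_mon lookup_add)

lemma swap_mon_zero[simp]: "swap_mon i 0 = 0"
  by (rule poly_mapping_eqI) (simp add: lookup_swap_mon)

lemma swap_mon_single: "swap_mon i (Poly_Mapping.single k n) = Poly_Mapping.single (tau i k) n"
  by (rule poly_mapping_eqI) (auto simp: lookup_swap_mon lookup_single when_def tau_eq_iff)

lemma swap_mon_eq_iff: "swap_mon i m = m' \<longleftrightarrow> m = swap_mon i m'"
  by auto

lemma lookup_swap_var: "Poly_Mapping.lookup (swap_var i f) m = Poly_Mapping.lookup f (swap_mon i m)"
proof -
  have "{m. Poly_Mapping.lookup f (swap_mon i m) \<noteq> 0} \<subseteq> swap_mon i ` Poly_Mapping.keys f"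
  proof
    fix k assume "k \<in> {m. Poly_Mapping.lookup f (swap_mon i m) \<noteq> 0}"
    hence "swap_mon i k \<in> Poly_Mapping.keys f" by (simp add: in_keys_iff)
    moreover have "k = swap_mon i (swap_mon i k)" by simp
    ultimately show "k \<in> swap_mon i ` Poly_Mapping.keys f" by blast
  qed
  hence fin: "finite {m. Poly_Mapping.lookup f (swap_mon i m) \<noteq> 0}"
    by (rule finite_subset[OF _ finite_imageI[OF finite_keys]])
  show ?thesis unfolding swap_var_def lookup_Abs_poly_mapping[OF fin] ..
qed

lemma swap_var_single: "swap_var i (Poly_Mapping.single m c) = Poly_Mapping.single (swap_mon i m) c"
  by (rule poly_mapping_eqI) (auto simp: lookup_swap_var lookup_single when_def swap_mon_eq_iff)

lemma swap_var_add[simp]: "swap_var i (f + g) = swap_var i f + swap_var i g"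
  by (rule poly_mapping_eqI) (simp add: lookup_swap_var lookup_add)

lemma swap_var_diff[simp]: "swap_var i (f - g) = swap_var i f - swap_var i g"
  by (rule poly_mapping_eqI) (simp add: lookup_swap_var lookup_minus)

lemma swap_var_uminus[simp]: "swap_var i (- f) = - swap_var i f"
  by (rule poly_mapping_eqI) (simp add: lookup_swap_var)

lemma swap_var_zero[simp]: "swap_var i 0 = 0"
  by (rule poly_mapping_eqI) (simp add: lookup_swap_var)

lemma swap_var_swap_var[simp]: "swap_var i (swap_var i f) = f"
  by (rule poly_mapping_eqI) (simp add: lookup_swap_var)

lemma swap_var_mult1: "swap_var i (frag_of x * g) = swap_var i (frag_of x) * swap_var i g"
proof (rule frag_induction[of g UNIV])
  fix y show "swap_var i (frag_of x * frag_of y) = swap_var i (frag_of x) * swap_var i (frag_of y)"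
    by (simp add: mult_single swap_var_single swap_mon_add)
next
  fix a b assume "swap_var i (frag_of x * a) = swap_var i (frag_of x) * swap_var i a"
    "swap_var i (frag_of x * b) = swap_var i (frag_of x) * swap_var i b"
  thus "swap_var i (frag_of x * (a - b)) = swap_var i (frag_of x) * swap_var i (a - b)"
    by (simp add: right_diff_distrib)
qed simp_all

lemma swap_var_mult[simp]: "swap_var i (f * g) = swap_var i f * swap_var i g"
proof (rule frag_induction[of f UNIV])
  fix a b assume "swap_var i (a * g) = swap_var i a * swap_var i g"
    "swap_var i (b * g) = swap_var i b * swap_var i g"
  thus "swap_var i ((a - b) * g) = swap_var i (a - b) * swap_var i g"
    by (simp add: left_diff_distrib)
qed (simp_all add: swap_var_mult1)

lemma swap_var_one[simp]: "swap_var i 1 = 1"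
  by (metis (no_types) single_one swap_mon_zero swap_var_single)

lemma swap_var_pow[simp]: "swap_var i (f ^ k) = swap_var i f ^ k"
  by (induction k) auto

lemma swap_var_sum[simp]: "swap_var i (sum f A) = (\<Sum>a\<in>A. swap_var i (f a))"
  by (induction A rule: infinite_finite_induct) auto

lemma swap_var_var[simp]: "swap_var i (var k) = var (tau i k)"
  by (simp add: var_def swap_var_single swap_mon_single)

lemma tau_simps[simp]: "tau i i = Suc i" "tau i (Suc i) = i" "k \<noteq> i \<Longrightarrow> k \<noteq> Suc i \<Longrightarrow> tau i k = k"
  by (auto simp: tau_def)


lemma mon_add: "mon (a + b) = mon a * mon b"
  by (simp add: mult_single)

lemma mon_zero: "mon 0 = 1"
  by simp

lemma var_pow: "var k ^ p = mon (Poly_Mapping.single k p)"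
proof (induction p)
  case 0 then show ?case by simp
next
  case (Suc p)
  have "Poly_Mapping.single k (Suc p) = Poly_Mapping.single k 1 + Poly_Mapping.single k p"
    by (simp add: single_add[symmetric])
  then show ?case using Suc by (simp add: var_def mult_single)
qed

lemma var_mon: "var k = mon (Poly_Mapping.single k 1)"
  by (simp add: var_def)

lemma swap_mon_fix: "Poly_Mapping.lookup m i = 0 \<Longrightarrow> Poly_Mapping.lookup m (Suc i) = 0 \<Longrightarrow> swap_mon i m = m"
  by (rule poly_mapping_eqI) (simp add: lookup_swap_mon tau_def)

lemma mon_decomp:
  "mon m = mon (Poly_Mapping.update i 0 (Poly_Mapping.update (Suc i) 0 m)) * var i ^ Poly_Mapping.lookup m i * var (Suc i) ^ Poly_Mapping.lookup m (Suc i)"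
proof -
  have "m = Poly_Mapping.update i 0 (Poly_Mapping.update (Suc i) 0 m) + Poly_Mapping.single i (Poly_Mapping.lookup m i) + Poly_Mapping.single (Suc i) (Poly_Mapping.lookup m (Suc i))"
    by (rule poly_mapping_eqI) (simp add: lookup_add lookup_update lookup_single when_def)
  hence "mon m = mon (Poly_Mapping.update i 0 (Poly_Mapping.update (Suc i) 0 m) + Poly_Mapping.single i (Poly_Mapping.lookup m i) + Poly_Mapping.single (Suc i) (Poly_Mapping.lookup m (Suc i)))"
    by simp
  thus ?thesis by (simp only: mon_add var_pow)
qed

lemma ring_quot_ex:
  fixes x y :: "'a::comm_ring_1"
  shows "\<exists>q. x ^ a * y ^ b - y ^ a * x ^ b = q * (x - y)"
proof (cases "b \<le> a")
  case True
  then obtain d where a: "a = b + d" using le_Suc_ex by blast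
  obtain S where S: "x ^ d - y ^ d = (x - y) * S"
    using power_diff_sumr2 by blast
  have "x ^ a * y ^ b - y ^ a * x ^ b = (x * y) ^ b * (x ^ d - y ^ d)"
    unfolding a by (simp add: power_add power_mult_distrib algebra_simps)
  also have "\<dots> = ((x * y) ^ b * S) * (x - y)" unfolding S by (simp add: algebra_simps)
  finally show ?thesis by blast
next
  case False
  then obtain d where a: "b = a + d" using le_Suc_ex
    by (metis le_add_diff_inverse nat_le_linear)
  obtain S where S: "x ^ d - y ^ d = (x - y) * S"
    using power_diff_sumr2 by blast
  have "x ^ a * y ^ b - y ^ a * x ^ b = - ((x * y) ^ a * (x ^ d - y ^ d))"
    unfolding a by (simp add: power_add power_mult_distrib algebra_simps)
  also have "\<dots> = (- ((x * y) ^ a * S)) * (x - y)" unfolding S by (simp add: algebra_simps)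
  finally show ?thesis by blast
qed

lemma quot_ex: "\<exists>q. q * (var i - var (Suc i)) = f - swap_var i f"
proof (rule frag_induction[of f UNIV])
  show "\<exists>q. q * (var i - var (Suc i)) = 0 - swap_var i 0" by (rule exI[of _ 0]) simp
next
  fix m :: "nat \<Rightarrow>\<^sub>0 nat"
  let ?m0 = "Poly_Mapping.update i 0 (Poly_Mapping.update (Suc i) 0 m)"
  have s0: "swap_var i (mon ?m0) = mon ?m0"
    by (simp add: swap_var_single swap_mon_fix lookup_update)
  obtain q where q: "var i ^ Poly_Mapping.lookup m i * var (Suc i) ^ Poly_Mapping.lookup m (Suc i)
     - var (Suc i) ^ Poly_Mapping.lookup m i * var i ^ Poly_Mapping.lookup m (Suc i) = q * (var i - var (Suc i))"
    using ring_quot_ex by blast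
  have "mon m - swap_var i (mon m) = mon ?m0 * (var i ^ Poly_Mapping.lookup m i * var (Suc i) ^ Poly_Mapping.lookup m (Suc i)
     - var (Suc i) ^ Poly_Mapping.lookup m i * var i ^ Poly_Mapping.lookup m (Suc i))"
    apply (subst (1 2) mon_decomp[of m i])
    by (simp only: swap_var_mult swap_var_pow swap_var_var s0 tau_simps) (simp add: algebra_simps)
  also have "\<dots> = (mon ?m0 * q) * (var i - var (Suc i))" by (simp add: q)
  finally show "\<exists>q. q * (var i - var (Suc i)) = frag_of m - swap_var i (frag_of m)" by metis
next
  fix a b assume "\<exists>q. q * (var i - var (Suc i)) = a - swap_var i a" "\<exists>q. q * (var i - var (Suc i)) = b - swap_var i b"
  then obtain qa qb where "qa * (var i - var (Suc i)) = a - swap_var i a" "qb * (var i - var (Suc i)) = b - swap_var i b"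
    by blast
  hence "(qa - qb) * (var i - var (Suc i)) = (a - b) - swap_var i (a - b)"
    by (simp only: left_diff_distrib swap_var_diff) (simp add: algebra_simps)
  thus "\<exists>q. q * (var i - var (Suc i)) = (a - b) - swap_var i (a - b)" by blast
qed simp

lemma var_inj: "var a = var b \<longleftrightarrow> a = b"
proof
  assume "var a = var b"
  hence "Poly_Mapping.lookup (var a) (Poly_Mapping.single a 1) = Poly_Mapping.lookup (var b) (Poly_Mapping.single a 1)"
    by simp
  hence "Poly_Mapping.single b (1::nat) = Poly_Mapping.single a 1"
    by (simp add: var_def lookup_single when_def split: if_splits)
  thus "a = b"
    by (metis lookup_single_eq lookup_single_not_eq zero_neq_one)
qed simp

lemma D_nz: "var i - var (Suc i) \<noteq> 0"
  using var_inj[of i "Suc i"] by simp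

lemma ddiff_spec: "ddiff i f * (var i - var (Suc i)) = f - swap_var i f"
proof -
  have "\<exists>!q. q * (var i - var (Suc i)) = f - swap_var i f"
    using quot_ex[of i f] D_nz[of i] by (metis mult_right_cancel)
  thus ?thesis unfolding ddiff_def by (rule theI')
qed

lemma ddiff_unique: "q * (var i - var (Suc i)) = f - swap_var i f \<Longrightarrow> ddiff i f = q"
  using ddiff_spec[of i f] D_nz[of i] by (metis mult_right_cancel)

definition wt :: "nat \<Rightarrow> bpoly" where "wt i = var i + beta * var i * var (Suc i)"

lemma dl_pi_alt: "dl_pi i f = ddiff i (wt i * f)"
  unfolding dl_pi_def wt_def by (simp add: algebra_simps)

lemma pi_char: "dl_pi i f * (var i - var (Suc i)) = wt i * f - swap_var i (wt i * f)"
  unfolding dl_pi_alt by (rule ddiff_spec)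

lemma pi_unique: "q * (var i - var (Suc i)) = wt i * f - swap_var i (wt i * f) \<Longrightarrow> dl_pi i f = q"
  unfolding dl_pi_alt by (rule ddiff_unique)

lemma pi_add[simp]: "dl_pi i (f + g) = dl_pi i f + dl_pi i g"
  by (rule pi_unique) (simp only: distrib_right pi_char, simp add: algebra_simps)

lemma pi_diff[simp]: "dl_pi i (f - g) = dl_pi i f - dl_pi i g"
  by (rule pi_unique) (simp only: left_diff_distrib pi_char, simp add: algebra_simps)

lemma pi_zero[simp]: "dl_pi i 0 = 0"
  by (rule pi_unique) simp

lemma pi_sum: "dl_pi i (sum f A) = (\<Sum>a\<in>A. dl_pi i (f a))"
  by (induction A rule: infinite_finite_induct) auto

lemma pi_mult_sym: "swap_var i h = h \<Longrightarrow> dl_pi i (h * f) = h * dl_pi i f"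
proof (rule pi_unique)
  assume h: "swap_var i h = h"
  have "h * dl_pi i f * (var i - var (Suc i)) = h * (dl_pi i f * (var i - var (Suc i)))"
    by (simp only: mult.assoc)
  also have "\<dots> = h * (wt i * f - swap_var i (wt i * f))" by (simp only: pi_char)
  also have "\<dots> = wt i * (h * f) - swap_var i (wt i * (h * f))"
    using h by (simp add: algebra_simps)
  finally show "h * dl_pi i f * (var i - var (Suc i)) = wt i * (h * f) - swap_var i (wt i * (h * f))" .
qed

lemma pi_sym[simp]: "swap_var i (dl_pi i f) = dl_pi i f"
proof -
  have "swap_var i (dl_pi i f * (var i - var (Suc i))) = swap_var i (wt i * f - swap_var i (wt i * f))"
    by (simp only: pi_char)
  hence "swap_var i (dl_pi i f) * (var (Suc i) - var i) = swap_var i (wt i * f) - wt i * f"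
    by simp
  have "swap_var i (dl_pi i f) * (var i - var (Suc i)) = - (swap_var i (dl_pi i f) * (var (Suc i) - var i))"
    by (simp add: algebra_simps)
  also have "\<dots> = wt i * f - swap_var i (wt i * f)" by (simp only: \<open>swap_var i (dl_pi i f) * (var (Suc i) - var i) = _\<close>) simp
  also have "\<dots> = dl_pi i f * (var i - var (Suc i))" by (simp only: pi_char)
  finally have "swap_var i (dl_pi i f) * (var i - var (Suc i)) = dl_pi i f * (var i - var (Suc i))" .
  thus ?thesis using D_nz[of i] by (metis mult_right_cancel)
qed

lemma pi_kill: "swap_var i (wt i * f) = wt i * f \<Longrightarrow> dl_pi i f = 0"
  by (rule pi_unique) simp


lemma lookup_swap_swap: "Poly_Mapping.lookup (swap_var i (swap_var j g)) m = Poly_Mapping.lookup g (swap_mon j (swap_mon i m))"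
  by (simp add: lookup_swap_var)

lemma swap_far_comm: "Suc i < j \<Longrightarrow> swap_var i (swap_var j g) = swap_var j (swap_var i g)"
proof (rule poly_mapping_eqI)
  fix m assume a: "Suc i < j"
  have "swap_mon j (swap_mon i m) = swap_mon i (swap_mon j m)"
    by (rule poly_mapping_eqI) (use a in \<open>auto simp: lookup_swap_mon tau_def\<close>)
  thus "Poly_Mapping.lookup (swap_var i (swap_var j g)) m = Poly_Mapping.lookup (swap_var j (swap_var i g)) m"
    by (simp add: lookup_swap_swap)
qed

lemma swap_braid: "swap_var (Suc i) (swap_var i (swap_var (Suc i) g)) = swap_var i (swap_var (Suc i) (swap_var i g))"
proof (rule poly_mapping_eqI)
  fix m
  have "swap_mon (Suc i) (swap_mon i (swap_mon (Suc i) m)) = swap_mon i (swap_mon (Suc i) (swap_mon i m))"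
    by (rule poly_mapping_eqI) (auto simp: lookup_swap_mon tau_def)
  thus "Poly_Mapping.lookup (swap_var (Suc i) (swap_var i (swap_var (Suc i) g))) m = Poly_Mapping.lookup (swap_var i (swap_var (Suc i) (swap_var i g))) m"
    by (simp add: lookup_swap_var)
qed

lemma swap_var_beta[simp]: "0 < i \<Longrightarrow> swap_var i beta = beta"
  by simp

lemma pi_comm:
  assumes "0 < i" "Suc i < j"
  shows "dl_pi i (dl_pi j g) = dl_pi j (dl_pi i g)"
proof -
  define Di Dj where "Di = var i - var (Suc i)" and "Dj = var j - var (Suc j)"
  have sDj: "swap_var i Dj = Dj" using assms by (simp add: Dj_def)
  have tDi: "swap_var j Di = Di" using assms by (simp add: Di_def)
  have swi: "swap_var j (wt i) = wt i" "swap_var j (swap_var i (wt i)) = swap_var i (wt i)"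
    using assms by (simp_all add: wt_def)
  have swj: "swap_var i (wt j) = wt j" "swap_var i (swap_var j (wt j)) = swap_var j (wt j)"
    using assms by (simp_all add: wt_def)
  have cm: "swap_var i (swap_var j g) = swap_var j (swap_var i g)" using assms(2) by (rule swap_far_comm)
  have e1: "dl_pi i (dl_pi j g) * (Di * Dj) = wt i * (wt j * g - swap_var j (wt j) * swap_var j g)
      - swap_var i (wt i) * (wt j * swap_var i g - swap_var j (wt j) * swap_var i (swap_var j g))"
  proof -
    have "dl_pi i (dl_pi j g) * (Di * Dj) = (dl_pi i (dl_pi j g) * Di) * Dj" by (simp only: mult.assoc)
    also have "\<dots> = (wt i * dl_pi j g - swap_var i (wt i * dl_pi j g)) * Dj"
      by (simp only: Di_def pi_char)
    also have "\<dots> = wt i * (dl_pi j g * Dj) - swap_var i (wt i) * swap_var i (dl_pi j g * Dj)"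
      using sDj by (simp add: algebra_simps)
    also have "\<dots> = wt i * (wt j * g - swap_var j (wt j * g)) - swap_var i (wt i) * swap_var i (wt j * g - swap_var j (wt j * g))"
      by (simp only: Dj_def pi_char)
    also have "\<dots> = wt i * (wt j * g - swap_var j (wt j) * swap_var j g)
      - swap_var i (wt i) * (wt j * swap_var i g - swap_var j (wt j) * swap_var i (swap_var j g))"
      using swj by simp
    finally show ?thesis .
  qed
  have e2: "dl_pi j (dl_pi i g) * (Di * Dj) = wt j * (wt i * g - swap_var i (wt i) * swap_var i g)
      - swap_var j (wt j) * (wt i * swap_var j g - swap_var i (wt i) * swap_var j (swap_var i g))"
  proof -
    have "dl_pi j (dl_pi i g) * (Di * Dj) = (dl_pi j (dl_pi i g) * Dj) * Di" by (simp only: ac_simps)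
    also have "\<dots> = (wt j * dl_pi i g - swap_var j (wt j * dl_pi i g)) * Di"
      by (simp only: Dj_def pi_char)
    also have "\<dots> = wt j * (dl_pi i g * Di) - swap_var j (wt j) * swap_var j (dl_pi i g * Di)"
      using tDi by (simp add: algebra_simps)
    also have "\<dots> = wt j * (wt i * g - swap_var i (wt i * g)) - swap_var j (wt j) * swap_var j (wt i * g - swap_var i (wt i * g))"
      by (simp only: Di_def pi_char)
    also have "\<dots> = wt j * (wt i * g - swap_var i (wt i) * swap_var i g)
      - swap_var j (wt j) * (wt i * swap_var j g - swap_var i (wt i) * swap_var j (swap_var i g))"
      using swi by simp
    finally show ?thesis .
  qed
  have "dl_pi i (dl_pi j g) * (Di * Dj) = dl_pi j (dl_pi i g) * (Di * Dj)"
    unfolding e1 e2 cm by (simp add: algebra_simps)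
  moreover have "Di * Dj \<noteq> 0" using D_nz by (simp add: Di_def Dj_def)
  ultimately show ?thesis by simp
qed


lemma pi_braid:
  assumes i0: "0 < i"
  shows "dl_pi i (dl_pi (Suc i) (dl_pi i g)) = dl_pi (Suc i) (dl_pi i (dl_pi (Suc i) g))"
proof -
  define X Y Z where "X = var i" and "Y = var (Suc i)" and "Z = var (Suc (Suc i))"
  have sw[simp]: "swap_var i X = Y" "swap_var i Y = X" "swap_var i Z = Z"
    "swap_var (Suc i) X = X" "swap_var (Suc i) Y = Z" "swap_var (Suc i) Z = Y"
    "swap_var i beta = beta" "swap_var (Suc i) beta = beta"
    using i0 by (simp_all add: X_def Y_def Z_def)
  have t0[simp]: "tau i 0 = 0" "tau (Suc i) 0 = 0" using i0 by (auto simp: tau_def)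
  have wi: "wt i = X + beta * X * Y" and wj: "wt (Suc i) = Y + beta * Y * Z"
    by (simp_all add: wt_def X_def Y_def Z_def)
  have ci: "dl_pi i f * (X - Y) = (X + beta * X * Y) * f - (Y + beta * Y * X) * swap_var i f" for f
  proof -
    have "dl_pi i f * (X - Y) = wt i * f - swap_var i (wt i * f)" unfolding X_def Y_def by (rule pi_char)
    thus ?thesis by (simp add: wi)
  qed
  have cj: "dl_pi (Suc i) f * (Y - Z) = (Y + beta * Y * Z) * f - (Z + beta * Z * Y) * swap_var (Suc i) f" for f
  proof -
    have "dl_pi (Suc i) f * (Y - Z) = wt (Suc i) * f - swap_var (Suc i) (wt (Suc i) * f)" unfolding Z_def Y_def by (rule pi_char)
    thus ?thesis by (simp add: wj)
  qed
  define g1 g2 where "g1 = swap_var i g" and "g2 = swap_var (Suc i) g"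
  define g3 g4 where "g3 = swap_var i g2" and "g4 = swap_var (Suc i) g1"
  define g5 where "g5 = swap_var i g4"
  have tg3: "swap_var (Suc i) g3 = g5" unfolding g5_def g4_def g3_def g2_def g1_def by (rule swap_braid)
  define a where "a = dl_pi i g"
  define b where "b = dl_pi (Suc i) a"
  define c where "c = dl_pi i b"
  have A1: "a * (X - Y) = (X + beta * X * Y) * g - (Y + beta * Y * X) * g1"
    unfolding a_def g1_def by (rule ci)
  have sa: "swap_var i a = a" unfolding a_def by simp
  have A2: "swap_var (Suc i) a * (X - Z) = (X + beta * X * Z) * g2 - (Z + beta * Z * X) * g4"
  proof -
    have "swap_var (Suc i) (a * (X - Y)) = swap_var (Suc i) ((X + beta * X * Y) * g - (Y + beta * Y * X) * g1)"
      by (simp only: A1)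
    thus ?thesis by (simp add: g2_def g4_def)
  qed
  have A3: "swap_var i (swap_var (Suc i) a) * (Y - Z) = (Y + beta * Y * Z) * g3 - (Z + beta * Z * Y) * g5"
  proof -
    have "swap_var i (swap_var (Suc i) a * (X - Z)) = swap_var i ((X + beta * X * Z) * g2 - (Z + beta * Z * X) * g4)"
      by (simp only: A2)
    thus ?thesis by (simp add: g3_def g5_def)
  qed
  have B1: "b * (Y - Z) = (Y + beta * Y * Z) * a - (Z + beta * Z * Y) * swap_var (Suc i) a"
    unfolding b_def by (rule cj)
  have B2: "swap_var i b * (X - Z) = (X + beta * X * Z) * a - (Z + beta * Z * X) * swap_var i (swap_var (Suc i) a)"
  proof -
    have "swap_var i (b * (Y - Z)) = swap_var i ((Y + beta * Y * Z) * a - (Z + beta * Z * Y) * swap_var (Suc i) a)"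
      by (simp only: B1)
    thus ?thesis by (simp add: sa)
  qed
  have C1: "c * (X - Y) = (X + beta * X * Y) * b - (Y + beta * Y * X) * swap_var i b"
    unfolding c_def by (rule ci)
  define w sw v tv sv stv where "w = X + beta * X * Y" and "sw = Y + beta * Y * X"
    and "v = Y + beta * Y * Z" and "tv = Z + beta * Z * Y" and "sv = X + beta * X * Z" and "stv = Z + beta * Z * X"
  have S1: "c * (X - Y) * (Y - Z) * (X - Z) = w * (X - Z) * (v * a - tv * swap_var (Suc i) a)
       - sw * (Y - Z) * (sv * a - stv * swap_var i (swap_var (Suc i) a))"
    using C1 B1 B2 unfolding w_def sw_def v_def tv_def sv_def stv_def by algebra
  have S2: "c * ((X - Y) * (Y - Z) * (X - Z)) * ((X - Y) * (Y - Z) * (X - Z)) =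
      w * (X - Z) * (v * (Y - Z) * (X - Z) * (a * (X - Y)) - tv * (X - Y) * (Y - Z) * (swap_var (Suc i) a * (X - Z)))
    - sw * (Y - Z) * (sv * (Y - Z) * (X - Z) * (a * (X - Y)) - stv * (X - Y) * (X - Z) * (swap_var i (swap_var (Suc i) a) * (Y - Z)))"
    using S1 by algebra
  have L: "c * ((X - Y) * (Y - Z) * (X - Z)) * ((X - Y) * (Y - Z) * (X - Z)) =
      w * (X - Z) * (v * (Y - Z) * (X - Z) * ((X + beta * X * Y) * g - (Y + beta * Y * X) * g1) - tv * (X - Y) * (Y - Z) * ((X + beta * X * Z) * g2 - (Z + beta * Z * X) * g4))
    - sw * (Y - Z) * (sv * (Y - Z) * (X - Z) * ((X + beta * X * Y) * g - (Y + beta * Y * X) * g1) - stv * (X - Y) * (X - Z) * ((Y + beta * Y * Z) * g3 - (Z + beta * Z * Y) * g5))"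
    using S2 unfolding A1 A2 A3 .
  define a' where "a' = dl_pi (Suc i) g"
  define b' where "b' = dl_pi i a'"
  define c' where "c' = dl_pi (Suc i) b'"
  have A1': "a' * (Y - Z) = (Y + beta * Y * Z) * g - (Z + beta * Z * Y) * g2"
    unfolding a'_def g2_def by (rule cj)
  have ta': "swap_var (Suc i) a' = a'" unfolding a'_def by simp
  have A2': "swap_var i a' * (X - Z) = (X + beta * X * Z) * g1 - (Z + beta * Z * X) * g3"
  proof -
    have "swap_var i (a' * (Y - Z)) = swap_var i ((Y + beta * Y * Z) * g - (Z + beta * Z * Y) * g2)"
      by (simp only: A1')
    thus ?thesis by (simp add: g1_def g3_def)
  qed
  have A3': "swap_var (Suc i) (swap_var i a') * (X - Y) = (X + beta * X * Y) * g4 - (Y + beta * Y * X) * g5"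
  proof -
    have "swap_var (Suc i) (swap_var i a' * (X - Z)) = swap_var (Suc i) ((X + beta * X * Z) * g1 - (Z + beta * Z * X) * g3)"
      by (simp only: A2')
    thus ?thesis by (simp add: g4_def tg3)
  qed
  have B1': "b' * (X - Y) = (X + beta * X * Y) * a' - (Y + beta * Y * X) * swap_var i a'"
    unfolding b'_def by (rule ci)
  have B2': "swap_var (Suc i) b' * (X - Z) = (X + beta * X * Z) * a' - (Z + beta * Z * X) * swap_var (Suc i) (swap_var i a')"
  proof -
    have "swap_var (Suc i) (b' * (X - Y)) = swap_var (Suc i) ((X + beta * X * Y) * a' - (Y + beta * Y * X) * swap_var i a')"
      by (simp only: B1')
    thus ?thesis by (simp add: ta')
  qed
  have C1': "c' * (Y - Z) = (Y + beta * Y * Z) * b' - (Z + beta * Z * Y) * swap_var (Suc i) b'"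
    unfolding c'_def by (rule cj)
  define tw tsw where "tw = X + beta * X * Z" and "tsw = Z + beta * Z * X"
  have S1': "c' * (X - Y) * (Y - Z) * (X - Z) = v * (X - Z) * (w * a' - sw * swap_var i a')
       - tv * (X - Y) * (tw * a' - tsw * swap_var (Suc i) (swap_var i a'))"
    using C1' B1' B2' unfolding w_def sw_def v_def tv_def tw_def tsw_def by algebra
  have S2': "c' * ((X - Y) * (Y - Z) * (X - Z)) * ((X - Y) * (Y - Z) * (X - Z)) =
      v * (X - Z) * (w * (X - Y) * (X - Z) * (a' * (Y - Z)) - sw * (X - Y) * (Y - Z) * (swap_var i a' * (X - Z)))
    - tv * (X - Y) * (tw * (X - Y) * (X - Z) * (a' * (Y - Z)) - tsw * (Y - Z) * (X - Z) * (swap_var (Suc i) (swap_var i a') * (X - Y)))"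
    using S1' by algebra
  have R: "c' * ((X - Y) * (Y - Z) * (X - Z)) * ((X - Y) * (Y - Z) * (X - Z)) =
      v * (X - Z) * (w * (X - Y) * (X - Z) * ((Y + beta * Y * Z) * g - (Z + beta * Z * Y) * g2) - sw * (X - Y) * (Y - Z) * ((X + beta * X * Z) * g1 - (Z + beta * Z * X) * g3))
    - tv * (X - Y) * (tw * (X - Y) * (X - Z) * ((Y + beta * Y * Z) * g - (Z + beta * Z * Y) * g2) - tsw * (Y - Z) * (X - Z) * ((X + beta * X * Y) * g4 - (Y + beta * Y * X) * g5))"
    using S2' unfolding A1' A2' A3' .
  have "c * ((X - Y) * (Y - Z) * (X - Z)) * ((X - Y) * (Y - Z) * (X - Z)) = c' * ((X - Y) * (Y - Z) * (X - Z)) * ((X - Y) * (Y - Z) * (X - Z))"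
    unfolding L R unfolding w_def sw_def v_def tv_def sv_def stv_def tw_def tsw_def by algebra
  moreover have "(X - Y) * (Y - Z) * (X - Z) \<noteq> 0"
    using D_nz[of i] D_nz[of "Suc i"] var_inj[of i "Suc (Suc i)"] by (simp add: X_def Y_def Z_def)
  ultimately have "c = c'" by simp
  thus ?thesis by (simp add: c_def b_def a_def c'_def b'_def a'_def)
qed


lemma dl_word_Nil[simp]: "dl_word [] f = f"
  by (simp add: dl_word_def)

lemma dl_word_Cons[simp]: "dl_word (x # xs) f = dl_pi x (dl_word xs f)"
  by (simp add: dl_word_def)

lemma dl_word_append: "dl_word (xs @ ys) f = dl_word xs (dl_word ys f)"
  by (simp add: dl_word_def)

lemma dl_word_zero[simp]: "dl_word ws 0 = 0"
  by (induction ws) auto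

lemma dl_word_diff: "dl_word ws (f - g) = dl_word ws f - dl_word ws g"
  by (induction ws) auto

lemma dl_word_sum: "dl_word ws (sum f A) = (\<Sum>a\<in>A. dl_word ws (f a))"
  by (induction ws) (auto simp: pi_sum)

definition cyc :: "nat \<Rightarrow> bpoly \<Rightarrow> bpoly" where "cyc k f = dl_word (rev [1..<Suc k]) f"

lemma cyc_0[simp]: "cyc 0 f = f"
  by (simp add: cyc_def)

lemma cyc_Suc: "cyc (Suc k) f = dl_pi (Suc k) (cyc k f)"
  by (simp add: cyc_def)

lemma cyc_zero[simp]: "cyc k 0 = 0"
  by (simp add: cyc_def)

lemma comm_cyc: "Suc k < j \<Longrightarrow> dl_pi j (cyc k f) = cyc k (dl_pi j f)"
proof (induction k)
  case 0 then show ?case by simp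
next
  case (Suc k)
  have "dl_pi j (cyc (Suc k) f) = dl_pi j (dl_pi (Suc k) (cyc k f))" by (simp add: cyc_Suc)
  also have "\<dots> = dl_pi (Suc k) (dl_pi j (cyc k f))"
    using pi_comm[of "Suc k" j "cyc k f"] Suc.prems by simp
  also have "\<dots> = dl_pi (Suc k) (cyc k (dl_pi j f))" using Suc by simp
  finally show ?case by (simp add: cyc_Suc)
qed

lemma cyc_shift: "0 < p \<Longrightarrow> Suc p \<le> k \<Longrightarrow> dl_pi p (cyc k f) = cyc k (dl_pi (Suc p) f)"
proof (induction k)
  case 0 then show ?case by simp
next
  case (Suc k)
  show ?case
  proof (cases "p = k")
    case True
    then obtain q where q: "p = Suc q" using Suc.prems by (cases p) auto
    have "dl_pi p (cyc (Suc k) f) = dl_pi p (dl_pi (Suc p) (dl_pi p (cyc q f)))"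
      using True q cyc_Suc[of q f] cyc_Suc[of k f] by simp
    also have "\<dots> = dl_pi (Suc p) (dl_pi p (dl_pi (Suc p) (cyc q f)))"
      using pi_braid Suc.prems by blast
    also have "\<dots> = dl_pi (Suc p) (dl_pi p (cyc q (dl_pi (Suc p) f)))"
      using comm_cyc[of q "Suc p" f] q by simp
    also have "\<dots> = cyc (Suc k) (dl_pi (Suc p) f)"
      using True q cyc_Suc[of q "dl_pi (Suc p) f"] cyc_Suc[of k "dl_pi (Suc p) f"] by simp
    finally show ?thesis .
  next
    case False
    hence "Suc p \<le> k" using Suc.prems by simp
    have "dl_pi p (cyc (Suc k) f) = dl_pi p (dl_pi (Suc k) (cyc k f))" by (simp add: cyc_Suc)
    also have "\<dots> = dl_pi (Suc k) (dl_pi p (cyc k f))"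
      using pi_comm[of p "Suc k" "cyc k f"] Suc.prems \<open>Suc p \<le> k\<close> by simp
    also have "\<dots> = dl_pi (Suc k) (cyc k (dl_pi (Suc p) f))"
      using Suc.IH Suc.prems \<open>Suc p \<le> k\<close> by simp
    finally show ?thesis by (simp add: cyc_Suc)
  qed
qed

lemma cyc_kill1: "0 < k \<Longrightarrow> dl_pi 1 f = 0 \<Longrightarrow> cyc k f = 0"
proof (induction k)
  case 0 then show ?case by simp
next
  case (Suc k)
  then show ?case by (cases k) (simp_all add: cyc_Suc)
qed

definition Wd :: "nat \<Rightarrow> nat list" where "Wd m = concat (map (\<lambda>k. rev [1..<Suc k]) [1..<Suc m])"

lemma w0_Wd: "2 \<le> n \<Longrightarrow> w0_word n = Wd (n - 2)"
proof -
  assume "2 \<le> n"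
  hence "n - 1 = Suc (n - 2)" by simp
  thus ?thesis by (simp add: w0_word_def Wd_def)
qed

lemma Wd_Suc: "dl_word (Wd (Suc m)) f = dl_word (Wd m) (cyc (Suc m) f)"
  by (simp add: Wd_def dl_word_append cyc_def)

lemma Wd_kill: "0 < i \<Longrightarrow> i \<le> m \<Longrightarrow> dl_pi i f = 0 \<Longrightarrow> dl_word (Wd m) f = 0"
proof (induction m arbitrary: i f)
  case 0 then show ?case by simp
next
  case (Suc m)
  show ?case
  proof (cases "i = 1")
    case True
    then show ?thesis using Suc.prems by (simp add: Wd_Suc cyc_kill1)
  next
    case False
    then obtain p where p: "i = Suc p" "0 < p" using Suc.prems by (cases i) auto
    have "dl_pi p (cyc (Suc m) f) = 0"
      using cyc_shift[of p "Suc m" f] p Suc.prems by simp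
    hence "dl_word (Wd m) (cyc (Suc m) f) = 0"
      using Suc.IH[of p] p Suc.prems by simp
    thus ?thesis by (simp add: Wd_Suc)
  qed
qed


definition filt :: "((nat \<Rightarrow>\<^sub>0 nat) \<Rightarrow> bool) \<Rightarrow> bpoly \<Rightarrow> bpoly" where
  "filt P f = Abs_poly_mapping (\<lambda>m. if P m then Poly_Mapping.lookup f m else 0)"

lemma lookup_filt: "Poly_Mapping.lookup (filt P f) m = (if P m then Poly_Mapping.lookup f m else 0)"
proof -
  have fin: "finite {m. (if P m then Poly_Mapping.lookup f m else 0) \<noteq> 0}"
    by (rule finite_subset[OF _ finite_keys[of f]]) (auto simp: in_keys_iff)
  show ?thesis unfolding filt_def lookup_Abs_poly_mapping[OF fin] ..
qed

lemma filt_add[simp]: "filt P (f + g) = filt P f + filt P g"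
  by (rule poly_mapping_eqI) (simp add: lookup_filt lookup_add)

lemma filt_diff[simp]: "filt P (f - g) = filt P f - filt P g"
  by (rule poly_mapping_eqI) (simp add: lookup_filt lookup_minus)

lemma filt_zero[simp]: "filt P 0 = 0"
  by (rule poly_mapping_eqI) (simp add: lookup_filt)

lemma filt_sum: "filt P (sum f A) = (\<Sum>a\<in>A. filt P (f a))"
  by (induction A rule: infinite_finite_induct) auto

lemma filt_single: "filt P (Poly_Mapping.single m c) = (if P m then Poly_Mapping.single m c else 0)"
  by (rule poly_mapping_eqI) (auto simp: lookup_filt lookup_single when_def)

lemma filt_and: "filt (\<lambda>m. P m \<and> Q m) f = filt P (filt Q f)"
  by (rule poly_mapping_eqI) (simp add: lookup_filt)

definition dep :: "nat set \<Rightarrow> ((nat \<Rightarrow>\<^sub>0 nat) \<Rightarrow> bool) \<Rightarrow> bool" where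
  "dep V P \<longleftrightarrow> (\<forall>m m'. (\<forall>k\<in>V. Poly_Mapping.lookup m k = Poly_Mapping.lookup m' k) \<longrightarrow> P m = P m')"

definition free :: "nat set \<Rightarrow> bpoly \<Rightarrow> bool" where
  "free V h \<longleftrightarrow> (\<forall>m\<in>Poly_Mapping.keys h. \<forall>k\<in>V. Poly_Mapping.lookup m k = 0)"

lemma filt_mult_free1:
  assumes "dep V P" "free V h"
  shows "filt P (frag_of x * h) = filt P (frag_of x) * h"
proof (rule frag_induction[of h "{m. \<forall>k\<in>V. Poly_Mapping.lookup m k = 0}"])
  show "Poly_Mapping.keys h \<subseteq> {m. \<forall>k\<in>V. Poly_Mapping.lookup m k = 0}"
    using assms(2) by (auto simp: free_def)
next
  fix y :: "nat \<Rightarrow>\<^sub>0 nat" assume "y \<in> {m. \<forall>k\<in>V. Poly_Mapping.lookup m k = 0}"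
  hence "P (x + y) = P x" using assms(1) unfolding dep_def by (simp add: lookup_add)
  thus "filt P (frag_of x * frag_of y) = filt P (frag_of x) * frag_of y"
    by (simp add: mult_single filt_single)
next
  fix a b assume "filt P (frag_of x * a) = filt P (frag_of x) * a" "filt P (frag_of x * b) = filt P (frag_of x) * b"
  thus "filt P (frag_of x * (a - b)) = filt P (frag_of x) * (a - b)"
    by (simp add: right_diff_distrib)
qed simp

lemma filt_mult_free:
  assumes "dep V P" "free V h"
  shows "filt P (f * h) = filt P f * h"
proof (rule frag_induction[of f UNIV])
  fix a b assume "filt P (a * h) = filt P a * h" "filt P (b * h) = filt P b * h"
  thus "filt P ((a - b) * h) = filt P (a - b) * h"
    by (simp add: left_diff_distrib)
qed (simp_all add: filt_mult_free1[OF assms])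

lemma filt_mult_free': "dep V P \<Longrightarrow> free V h \<Longrightarrow> filt P (h * f) = h * filt P f"
  using filt_mult_free[of V P h f] by (simp add: mult.commute)

lemma free_var: "k \<notin> V \<Longrightarrow> free V (var k)"
  by (auto simp: free_def var_def lookup_single when_def)

lemma free_mult: "free V a \<Longrightarrow> free V b \<Longrightarrow> free V (a * b)"
  unfolding free_def using keys_mult[of a b] by (force simp: lookup_add)

lemma free_add: "free V a \<Longrightarrow> free V b \<Longrightarrow> free V (a + b)"
  unfolding free_def using keys_add[of a b] by blast

lemma free_diff: "free V a \<Longrightarrow> free V b \<Longrightarrow> free V (a - b)"
  unfolding free_def using keys_diff[of a b] by blast

lemma free_one: "free V 1"
  by (simp add: free_def)

lemma free_pow: "free V a \<Longrightarrow> free V (a ^ k)"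
  by (induction k) (simp_all add: free_one free_mult)

lemma free_zero: "free V 0"
  by (simp add: free_def)

lemma free_sum: "(\<And>x. x \<in> A \<Longrightarrow> free V (f x)) \<Longrightarrow> free V (sum f A)"
  by (induction A rule: infinite_finite_induct) (simp_all add: free_add free_zero)

lemma free_mon: "(\<forall>k\<in>V. Poly_Mapping.lookup m k = 0) \<Longrightarrow> free V (mon m)"
  by (simp add: free_def)

lemma free_swap:
  assumes "free {i, Suc i} h" shows "swap_var i h = h"
proof (rule poly_mapping_eqI)
  fix m
  have fx: "swap_mon i m' = m'" if "m' \<in> Poly_Mapping.keys h" for m'
    using assms that by (intro swap_mon_fix) (auto simp: free_def)
  show "Poly_Mapping.lookup (swap_var i h) m = Poly_Mapping.lookup h m"
  proof (cases "swap_mon i m \<in> Poly_Mapping.keys h")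
    case True
    then show ?thesis using fx[OF True] by (simp add: lookup_swap_var)
  next
    case False
    hence "m \<notin> Poly_Mapping.keys h" using fx by force
    then show ?thesis using False by (simp add: lookup_swap_var in_keys_iff)
  qed
qed

lemma dep_swap_mon: "dep V P \<Longrightarrow> i \<notin> V \<Longrightarrow> Suc i \<notin> V \<Longrightarrow> P (swap_mon i m) = P m"
  unfolding dep_def by (metis lookup_swap_mon tau_def fun_upd_other id_apply)

lemma filt_swap:
  assumes "dep V P" "i \<notin> V" "Suc i \<notin> V"
  shows "filt P (swap_var i f) = swap_var i (filt P f)"
  by (rule poly_mapping_eqI) (simp add: lookup_filt lookup_swap_var dep_swap_mon[OF assms])

lemma filt_pi:
  assumes "dep V P" "0 \<notin> V" "i \<notin> V" "Suc i \<notin> V"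
  shows "filt P (dl_pi i f) = dl_pi i (filt P f)"
proof (rule sym, rule pi_unique)
  have fD: "free V (var i - var (Suc i))" using assms by (intro free_diff free_var)
  have fw: "free V (wt i)" using assms unfolding wt_def by (intro free_add free_mult free_var)
  have "filt P (dl_pi i f) * (var i - var (Suc i)) = filt P (dl_pi i f * (var i - var (Suc i)))"
    by (rule filt_mult_free[OF assms(1) fD, symmetric])
  also have "\<dots> = filt P (wt i * f) - filt P (swap_var i (wt i * f))"
    by (simp only: pi_char filt_diff)
  also have "\<dots> = wt i * filt P f - swap_var i (wt i * filt P f)"
    by (simp only: filt_swap[OF assms(1,3,4)] filt_mult_free'[OF assms(1) fw])
  finally show "filt P (dl_pi i f) * (var i - var (Suc i)) = wt i * filt P f - swap_var i (wt i * filt P f)" .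
qed

lemma filt_dl_word:
  assumes "\<And>x g. x \<in> set ws \<Longrightarrow> filt P (dl_pi x g) = dl_pi x (filt P g)"
  shows "filt P (dl_word ws f) = dl_word ws (filt P f)"
  using assms by (induction ws) auto

lemma filt_var_pow:
  assumes "free {j} h"
  shows "filt (\<lambda>m. Q (Poly_Mapping.lookup m j)) (h * var j ^ q) = (if Q q then h * var j ^ q else 0)"
proof (rule frag_induction[of h "{m. Poly_Mapping.lookup m j = 0}"])
  show "Poly_Mapping.keys h \<subseteq> {m. Poly_Mapping.lookup m j = 0}" using assms by (auto simp: free_def)
next
  fix x :: "nat \<Rightarrow>\<^sub>0 nat" assume "x \<in> {m. Poly_Mapping.lookup m j = 0}"
  thus "filt (\<lambda>m. Q (Poly_Mapping.lookup m j)) (frag_of x * var j ^ q) = (if Q q then frag_of x * var j ^ q else 0)"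
    by (simp add: var_pow mult_single filt_single lookup_add)
next
  fix a b assume "filt (\<lambda>m. Q (Poly_Mapping.lookup m j)) (a * var j ^ q) = (if Q q then a * var j ^ q else 0)"
    "filt (\<lambda>m. Q (Poly_Mapping.lookup m j)) (b * var j ^ q) = (if Q q then b * var j ^ q else 0)"
  thus "filt (\<lambda>m. Q (Poly_Mapping.lookup m j)) ((a - b) * var j ^ q) = (if Q q then (a - b) * var j ^ q else 0)"
    by (simp add: left_diff_distrib)
qed simp


lemma telescope1:
  fixes X Y :: "'a::comm_ring_1"
  shows "(\<Sum>k\<le>d. X ^ (b + d - k) * Y ^ (b + k)) * (X - Y) = X * X ^ (b + d) * Y ^ b - X ^ b * (Y * Y ^ (b + d))"
proof -
  define f where "f k = X ^ (b + d + 1 - k) * Y ^ (b + k)" for k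
  have "(\<Sum>k\<le>d. X ^ (b + d - k) * Y ^ (b + k)) * (X - Y) = (\<Sum>k\<le>d. f k - f (Suc k))"
    unfolding sum_distrib_right
  proof (rule sum.cong[OF refl])
    fix k assume "k \<in> {..d}"
    hence k: "b + d + 1 - k = Suc (b + d - k)" "b + d + 1 - Suc k = b + d - k" by auto
    show "X ^ (b + d - k) * Y ^ (b + k) * (X - Y) = f k - f (Suc k)"
      unfolding f_def k by (simp add: algebra_simps)
  qed
  also have "\<dots> = f 0 - f (Suc d)" by (rule sum_telescope)
  also have "\<dots> = X * X ^ (b + d) * Y ^ b - X ^ b * (Y * Y ^ (b + d))"
    by (simp add: f_def)
  finally show ?thesis .
qed

lemma telescope2:
  fixes X Y :: "'a::comm_ring_1"
  shows "(\<Sum>k<d. X ^ (b + d - k) * Y ^ (b + k + 1)) * (X - Y) = X * X ^ (b + d) * (Y * Y ^ b) - X * X ^ b * (Y * Y ^ (b + d))"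
proof -
  define f where "f k = X ^ (b + d + 1 - k) * Y ^ (b + k + 1)" for k
  have "(\<Sum>k<d. X ^ (b + d - k) * Y ^ (b + k + 1)) * (X - Y) = (\<Sum>k<d. f k - f (Suc k))"
    unfolding sum_distrib_right
  proof (rule sum.cong[OF refl])
    fix k assume "k \<in> {..<d}"
    hence k: "b + d + 1 - k = Suc (b + d - k)" "b + d + 1 - Suc k = b + d - k" by auto
    show "X ^ (b + d - k) * Y ^ (b + k + 1) * (X - Y) = f k - f (Suc k)"
      unfolding f_def k by (simp add: algebra_simps)
  qed
  also have "\<dots> = f 0 - f d" by (rule sum_lessThan_telescope')
  also have "\<dots> = X * X ^ (b + d) * (Y * Y ^ b) - X * X ^ b * (Y * Y ^ (b + d))"
    by (simp add: f_def)
  finally show ?thesis .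
qed

definition piS :: "nat \<Rightarrow> nat \<Rightarrow> nat \<Rightarrow> bpoly" where
  "piS i b d = (\<Sum>k\<le>d. var i ^ (b + d - k) * var (Suc i) ^ (b + k)) + beta * (\<Sum>k<d. var i ^ (b + d - k) * var (Suc i) ^ (b + k + 1))"

lemma pi_pow:
  assumes "0 < i"
  shows "dl_pi i (var i ^ (b + d) * var (Suc i) ^ b) = piS i b d"
proof (rule pi_unique)
  have t0: "tau i 0 = 0" using assms by (auto simp: tau_def)
  define X Y where "X = var i" and "Y = var (Suc i)"
  have "piS i b d * (X - Y) = (X * X ^ (b + d) * Y ^ b - X ^ b * (Y * Y ^ (b + d))) + beta * (X * X ^ (b + d) * (Y * Y ^ b) - X * X ^ b * (Y * Y ^ (b + d)))"
    unfolding piS_def X_def[symmetric] Y_def[symmetric] distrib_right mult.assoc[of beta] telescope1 telescope2 ..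
  also have "\<dots> = wt i * (X ^ (b + d) * Y ^ b) - swap_var i (wt i * (X ^ (b + d) * Y ^ b))"
    by (simp add: wt_def X_def Y_def t0 algebra_simps)
  finally show "piS i b d * (var i - var (Suc i)) = wt i * (var i ^ (b + d) * var (Suc i) ^ b) - swap_var i (wt i * (var i ^ (b + d) * var (Suc i) ^ b))"
    by (simp add: X_def Y_def)
qed

lemma pi_pow_mult:
  assumes "0 < i" "swap_var i h = h"
  shows "dl_pi i (h * (var i ^ (b + d) * var (Suc i) ^ b)) = h * piS i b d"
  using pi_mult_sym[OF assms(2)] pi_pow[OF assms(1)] by simp


lemma free_mono: "free V h \<Longrightarrow> W \<subseteq> V \<Longrightarrow> free W h"
  unfolding free_def by blast

lemma dep_lookup: "dep {j} (\<lambda>m. Q (Poly_Mapping.lookup m j))"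
  unfolding dep_def by simp

lemma sum_if_lt1: "k \<le> Suc (N::nat) \<Longrightarrow> (\<Sum>l\<le>N. if l < k then f l else 0) = (\<Sum>l<k. f l)"
proof -
  assume a: "k \<le> Suc N"
  have "{l \<in> {..N}. l < k} = {..<k}" using a by auto
  thus ?thesis using sum.inter_filter[of "{..N}" f "\<lambda>l. l < k"] by simp
qed

lemma sum_if_lt2: "k \<le> (N::nat) \<Longrightarrow> (\<Sum>l<N. if l < k then f l else 0) = (\<Sum>l<k. f l)"
proof -
  assume a: "k \<le> N"
  have "{l \<in> {..<N}. l < k} = {..<k}" using a less_le_trans by auto
  thus ?thesis using sum.inter_filter[of "{..<N}" f "\<lambda>l. l < k"] by simp
qed

lemma filt_piS:
  assumes "0 < j"
  shows "filt (\<lambda>m. \<not> (c \<le> Poly_Mapping.lookup m j \<and> Poly_Mapping.lookup m j \<le> c + e)) (piS j c (e + k))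
    = (1 + beta * var (Suc j)) * (\<Sum>l<k. var j ^ (c + (e + k) - l) * var (Suc j) ^ (c + l))"
proof -
  define Q where "Q p = (\<not> (c \<le> p \<and> p \<le> c + e))" for p
  define Y Z where "Y = var j" and "Z = var (Suc j)"
  have P: "(\<lambda>m. \<not> (c \<le> Poly_Mapping.lookup m j \<and> Poly_Mapping.lookup m j \<le> c + e)) = (\<lambda>m. Q (Poly_Mapping.lookup m j))"
    by (simp add: Q_def)
  have fZ: "free {j} (Z ^ q)" for q unfolding Z_def by (intro free_pow free_var) simp
  have fB: "free {j} beta" using assms by (intro free_var) simp
  have t1: "filt (\<lambda>m. Q (Poly_Mapping.lookup m j)) (Y ^ (c + (e + k) - l) * Z ^ (c + l)) = (if l < k then Y ^ (c + (e + k) - l) * Z ^ (c + l) else 0)"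
    if "l \<le> e + k" for l
  proof -
    have "Q (c + (e + k) - l) = (l < k)" using that by (auto simp: Q_def)
    thus ?thesis using filt_var_pow[OF fZ[of "c + l"], where Q=Q and q="c + (e + k) - l"] by (simp add: Y_def mult.commute)
  qed
  have t2: "filt (\<lambda>m. Q (Poly_Mapping.lookup m j)) (Y ^ (c + (e + k) - l) * Z ^ (c + l + 1)) = (if l < k then Y ^ (c + (e + k) - l) * Z ^ (c + l + 1) else 0)"
    if "l < e + k" for l
  proof -
    have "Q (c + (e + k) - l) = (l < k)" using that by (auto simp: Q_def)
    thus ?thesis using filt_var_pow[OF fZ[of "c + l + 1"], where Q=Q and q="c + (e + k) - l"] by (simp add: Y_def mult.commute)
  qed
  have "filt (\<lambda>m. Q (Poly_Mapping.lookup m j)) (piS j c (e + k))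
      = (\<Sum>l\<le>e + k. filt (\<lambda>m. Q (Poly_Mapping.lookup m j)) (Y ^ (c + (e + k) - l) * Z ^ (c + l)))
        + beta * (\<Sum>l<e + k. filt (\<lambda>m. Q (Poly_Mapping.lookup m j)) (Y ^ (c + (e + k) - l) * Z ^ (c + l + 1)))"
    unfolding piS_def Y_def[symmetric] Z_def[symmetric] filt_add filt_mult_free'[OF dep_lookup fB] filt_sum ..
  also have "\<dots> = (\<Sum>l\<le>e + k. if l < k then Y ^ (c + (e + k) - l) * Z ^ (c + l) else 0)
        + beta * (\<Sum>l<e + k. if l < k then Y ^ (c + (e + k) - l) * Z ^ (c + l + 1) else 0)"
    using t1 t2 by simp
  also have "\<dots> = (\<Sum>l<k. Y ^ (c + (e + k) - l) * Z ^ (c + l)) + beta * (\<Sum>l<k. Y ^ (c + (e + k) - l) * Z ^ (c + l + 1))"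
    by (simp add: sum_if_lt1 sum_if_lt2)
  also have "\<dots> = (1 + beta * Z) * (\<Sum>l<k. Y ^ (c + (e + k) - l) * Z ^ (c + l))"
    by (simp add: algebra_simps sum_distrib_left sum.distrib[symmetric])
  finally show ?thesis unfolding P Y_def Z_def .
qed

lemma filt_pi_F:
  assumes "0 < j" "free {j, Suc j} h"
  shows "filt (\<lambda>m. \<not> (c \<le> Poly_Mapping.lookup m j \<and> Poly_Mapping.lookup m j \<le> c + e)) (dl_pi j (h * (var j ^ (c + (e + k)) * var (Suc j) ^ c)))
    = h * ((1 + beta * var (Suc j)) * (\<Sum>l<k. var j ^ (c + (e + k) - l) * var (Suc j) ^ (c + l)))"
proof -
  have "dl_pi j (h * (var j ^ (c + (e + k)) * var (Suc j) ^ c)) = h * piS j c (e + k)"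
    by (rule pi_pow_mult[OF assms(1) free_swap[OF assms(2)]])
  have fh: "free {j} h" using assms(2) by (rule free_mono) auto
  have dp: "dep {j} (\<lambda>m. \<not> (c \<le> Poly_Mapping.lookup m j \<and> Poly_Mapping.lookup m j \<le> c + e))"
    unfolding dep_def by simp
  show ?thesis
    unfolding \<open>dl_pi j _ = _\<close> filt_mult_free'[OF dp fh] filt_piS[OF assms(1)] ..
qed


lemma dsum_swap: "(\<Sum>k<d. \<Sum>l<Suc k. A k l) = (\<Sum>l<d. \<Sum>q<d - l. A (l + q) l)"
proof (induction d)
  case 0 then show ?case by simp
next
  case (Suc d)
  have "(\<Sum>l<Suc d. \<Sum>q<Suc d - l. A (l + q) l) = (\<Sum>l<Suc d. (\<Sum>q<d - l. A (l + q) l) + A d l)"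
  proof (rule sum.cong[OF refl])
    fix l assume "l \<in> {..<Suc d}"
    hence "Suc d - l = Suc (d - l)" "l + (d - l) = d" by auto
    thus "(\<Sum>q<Suc d - l. A (l + q) l) = (\<Sum>q<d - l. A (l + q) l) + A d l" by simp
  qed
  also have "\<dots> = (\<Sum>l<d. \<Sum>q<d - l. A (l + q) l) + (\<Sum>l<Suc d. A d l)"
    by (simp add: sum.distrib)
  finally show ?case using Suc by simp
qed

lemma G_sym: "swap_var i (\<Sum>q<n. var i ^ (n - Suc q) * var (Suc i) ^ q) = (\<Sum>q<n. var i ^ (n - Suc q) * var (Suc i) ^ q)"
proof -
  have "swap_var i (\<Sum>q<n. var i ^ (n - Suc q) * var (Suc i) ^ q) = (\<Sum>q<n. var (Suc i) ^ (n - Suc q) * var i ^ q)"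
    by simp
  also have "\<dots> = (\<Sum>q<n. var (Suc i) ^ (n - Suc (n - Suc q)) * var i ^ (n - Suc q))"
    by (rule sum.nat_diff_reindex[symmetric])
  also have "\<dots> = (\<Sum>q<n. var i ^ (n - Suc q) * var (Suc i) ^ q)"
    by (rule sum.cong[OF refl]) (auto simp: mult.commute Suc_diff_Suc)
  finally show ?thesis .
qed

lemma mon_decomp3:
  "mon m = mon (Poly_Mapping.update i 0 (Poly_Mapping.update (Suc i) 0 (Poly_Mapping.update (Suc (Suc i)) 0 m)))
     * var (Suc (Suc i)) ^ Poly_Mapping.lookup m (Suc (Suc i)) * var i ^ Poly_Mapping.lookup m i * var (Suc i) ^ Poly_Mapping.lookup m (Suc i)"
proof -
  have "m = Poly_Mapping.update i 0 (Poly_Mapping.update (Suc i) 0 (Poly_Mapping.update (Suc (Suc i)) 0 m))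
     + Poly_Mapping.single (Suc (Suc i)) (Poly_Mapping.lookup m (Suc (Suc i))) + Poly_Mapping.single i (Poly_Mapping.lookup m i) + Poly_Mapping.single (Suc i) (Poly_Mapping.lookup m (Suc i))"
    by (rule poly_mapping_eqI) (simp add: lookup_add lookup_update lookup_single when_def)
  hence "mon m = mon (Poly_Mapping.update i 0 (Poly_Mapping.update (Suc i) 0 (Poly_Mapping.update (Suc (Suc i)) 0 m))
     + Poly_Mapping.single (Suc (Suc i)) (Poly_Mapping.lookup m (Suc (Suc i))) + Poly_Mapping.single i (Poly_Mapping.lookup m i) + Poly_Mapping.single (Suc i) (Poly_Mapping.lookup m (Suc i)))"
    by simp
  thus ?thesis by (simp only: mon_add var_pow)
qed

lemma lemmaK:
  assumes i0: "0 < i" and mb: "Poly_Mapping.lookup m (Suc i) = c + e"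
    and ma: "Poly_Mapping.lookup m i = c + e + d" and mc: "Poly_Mapping.lookup m (Suc (Suc i)) = c"
  shows "dl_pi i (filt (\<lambda>m'. \<not> (c \<le> Poly_Mapping.lookup m' (Suc i) \<and> Poly_Mapping.lookup m' (Suc i) \<le> c + e))
            (dl_pi (Suc i) (dl_pi i (mon m)))) = 0"
proof -
  define b where "b = c + e"
  define R where "R = mon (Poly_Mapping.update i 0 (Poly_Mapping.update (Suc i) 0 (Poly_Mapping.update (Suc (Suc i)) 0 m)))"
  define X Y Z where "X = var i" and "Y = var (Suc i)" and "Z = var (Suc (Suc i))"
  have fR: "free {i, Suc i, Suc (Suc i)} R" unfolding R_def by (rule free_mon) (simp add: lookup_update)
  have t0: "tau i 0 = 0" using i0 by (auto simp: tau_def)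
  have sw: "swap_var i X = Y" "swap_var i Y = X" "swap_var i Z = Z" "swap_var i beta = beta"
    using t0 by (simp_all add: X_def Y_def Z_def)
  have sR: "swap_var i R = R" by (rule free_swap, rule free_mono[OF fR]) auto
  have fX: "free {Suc i, Suc (Suc i)} X" unfolding X_def by (rule free_var) simp
  have fB: "free {Suc i, Suc (Suc i)} beta" by (rule free_var) simp
  have fR2: "free {Suc i, Suc (Suc i)} R" by (rule free_mono[OF fR]) auto
  have step1: "dl_pi i (mon m) = (R * Z ^ c) * piS i b d"
  proof -
    have "mon m = (R * Z ^ c) * (var i ^ (b + d) * var (Suc i) ^ b)"
      using mon_decomp3[of m i] ma mb mc by (simp add: R_def Z_def b_def ac_simps)
    moreover have "swap_var i (R * Z ^ c) = R * Z ^ c" using sR sw by simp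
    ultimately show ?thesis using pi_pow_mult[OF i0] by simp
  qed
  define h1 h2 where "h1 k = R * X ^ (b + d - k)" and "h2 k = R * beta * X ^ (b + d - k)" for k
  have step2: "(R * Z ^ c) * piS i b d = (\<Sum>k\<le>d. h1 k * (var (Suc i) ^ (c + (e + k)) * var (Suc (Suc i)) ^ c))
      + (\<Sum>k<d. h2 k * (var (Suc i) ^ (c + (e + Suc k)) * var (Suc (Suc i)) ^ c))"
    unfolding piS_def distrib_left
  proof (rule arg_cong2[where f="(+)"])
    show "R * Z ^ c * (\<Sum>k\<le>d. var i ^ (b + d - k) * var (Suc i) ^ (b + k)) = (\<Sum>k\<le>d. h1 k * (var (Suc i) ^ (c + (e + k)) * var (Suc (Suc i)) ^ c))"
      unfolding sum_distrib_left by (rule sum.cong[OF refl]) (simp add: h1_def b_def X_def Z_def ac_simps)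
    show "R * Z ^ c * (beta * (\<Sum>k<d. var i ^ (b + d - k) * var (Suc i) ^ (b + k + 1))) = (\<Sum>k<d. h2 k * (var (Suc i) ^ (c + (e + Suc k)) * var (Suc (Suc i)) ^ c))"
      unfolding sum_distrib_left by (rule sum.cong[OF refl]) (simp add: h2_def b_def X_def Z_def ac_simps)
  qed
  have fh1: "free {Suc i, Suc (Suc i)} (h1 k)" for k unfolding h1_def by (intro free_mult free_pow fR2 fX)
  have fh2: "free {Suc i, Suc (Suc i)} (h2 k)" for k unfolding h2_def by (intro free_mult free_pow fR2 fX fB)
  define F where "F k = (1 + beta * Z) * (\<Sum>l<k. Y ^ (c + (e + k) - l) * Z ^ (c + l))" for k
  define P where "P = (\<lambda>m'. \<not> (c \<le> Poly_Mapping.lookup m' (Suc i) \<and> Poly_Mapping.lookup m' (Suc i) \<le> c + e))"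
  have fF: "filt P (dl_pi (Suc i) (h * (var (Suc i) ^ (c + (e + k)) * var (Suc (Suc i)) ^ c))) = h * F k"
    if "free {Suc i, Suc (Suc i)} h" for h k
    using filt_pi_F[of "Suc i" h c e k] that by (simp add: P_def F_def Y_def Z_def)
  have step3: "filt P (dl_pi (Suc i) (dl_pi i (mon m))) = (\<Sum>k\<le>d. h1 k * F k) + (\<Sum>k<d. h2 k * F (Suc k))"
    unfolding step1 step2 pi_add pi_sum filt_add filt_sum by (simp only: fF[OF fh1] fF[OF fh2])
  have F0: "F 0 = 0" by (simp add: F_def)
  define S where "S = (\<Sum>k<d. X ^ (d - Suc k) * (\<Sum>l<Suc k. Y ^ (k - l) * Z ^ l))"
  define Sym where "Sym = R * (1 + beta * Z) * Z ^ c * (X * Y) ^ b * S"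
  have FS: "F (Suc k) = (1 + beta * Z) * (Y * Y ^ b * Z ^ c * (\<Sum>l<Suc k. Y ^ (k - l) * Z ^ l))" for k
  proof -
    have inner: "(\<Sum>l<Suc k. Y ^ (c + (e + Suc k) - l) * Z ^ (c + l)) = (\<Sum>l<Suc k. Y * Y ^ b * Z ^ c * (Y ^ (k - l) * Z ^ l))"
    proof (rule sum.cong[OF refl])
      fix l assume "l \<in> {..<Suc k}"
      hence "c + (e + Suc k) - l = Suc (b + (k - l))" by (auto simp: b_def)
      thus "Y ^ (c + (e + Suc k) - l) * Z ^ (c + l) = Y * Y ^ b * Z ^ c * (Y ^ (k - l) * Z ^ l)"
        by (simp add: power_add ac_simps)
    qed
    show ?thesis unfolding F_def inner by (simp only: sum_distrib_left)
  qed
  have step4: "(\<Sum>k\<le>d. h1 k * F k) + (\<Sum>k<d. h2 k * F (Suc k)) = Y * (1 + beta * X) * Sym"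
  proof -
    have "(\<Sum>k\<le>d. h1 k * F k) = (\<Sum>k<d. h1 (Suc k) * F (Suc k))"
      unfolding lessThan_Suc_atMost[symmetric] sum.lessThan_Suc_shift F0 by simp
    hence "(\<Sum>k\<le>d. h1 k * F k) + (\<Sum>k<d. h2 k * F (Suc k)) = (\<Sum>k<d. h1 (Suc k) * F (Suc k) + h2 k * F (Suc k))"
      by (simp add: sum.distrib)
    also have "\<dots> = (\<Sum>k<d. Y * (1 + beta * X) * (R * (1 + beta * Z) * Z ^ c * (X * Y) ^ b * (X ^ (d - Suc k) * (\<Sum>l<Suc k. Y ^ (k - l) * Z ^ l))))"
    proof (rule sum.cong[OF refl])
      fix k assume "k \<in> {..<d}"
      hence e1: "b + d - Suc k = b + (d - Suc k)" and e2: "b + d - k = Suc (b + (d - Suc k))" by auto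
      show "h1 (Suc k) * F (Suc k) + h2 k * F (Suc k) = Y * (1 + beta * X) * (R * (1 + beta * Z) * Z ^ c * (X * Y) ^ b * (X ^ (d - Suc k) * (\<Sum>l<Suc k. Y ^ (k - l) * Z ^ l)))"
        unfolding FS h1_def h2_def e1 e2 by (simp add: power_add power_mult_distrib algebra_simps)
    qed
    also have "\<dots> = Y * (1 + beta * X) * Sym"
      by (simp add: Sym_def S_def sum_distrib_left)
    finally show ?thesis .
  qed
  have sS: "swap_var i S = S"
  proof -
    have "S = (\<Sum>k<d. \<Sum>l<Suc k. X ^ (d - Suc k) * (Y ^ (k - l) * Z ^ l))"
      unfolding S_def by (simp only: sum_distrib_left)
    also have "\<dots> = (\<Sum>l<d. \<Sum>q<d - l. X ^ (d - Suc (l + q)) * (Y ^ (l + q - l) * Z ^ l))"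
      by (rule dsum_swap)
    also have "\<dots> = (\<Sum>l<d. Z ^ l * (\<Sum>q<d - l. var i ^ (d - l - Suc q) * var (Suc i) ^ q))"
      unfolding sum_distrib_left
      by (intro sum.cong refl) (simp add: X_def Y_def ac_simps diff_diff_add)
    finally have Se: "S = \<dots>" .
    define G where "G n = (\<Sum>q<n. var i ^ (n - Suc q) * var (Suc i) ^ q)" for n
    have sG: "swap_var i (G n) = G n" for n unfolding G_def by (rule G_sym)
    show ?thesis unfolding Se G_def[symmetric] by (simp only: swap_var_sum swap_var_mult swap_var_pow sw sG)
  qed
  have sSym: "swap_var i Sym = Sym"
    unfolding Sym_def by (simp add: sw sR sS t0 mult.commute)
  have "dl_pi i (Y * (1 + beta * X) * Sym) = 0"
  proof (rule pi_kill)
    have e: "wt i * (Y * (1 + beta * X) * Sym) = X * Y * (1 + beta * X) * (1 + beta * Y) * Sym"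
      by (simp add: wt_def X_def Y_def algebra_simps)
    have "swap_var i (X * Y * (1 + beta * X) * (1 + beta * Y) * Sym) = X * Y * (1 + beta * X) * (1 + beta * Y) * Sym"
      by (simp only: swap_var_mult swap_var_add swap_var_one sw sSym) (simp add: algebra_simps)
    thus "swap_var i (wt i * (Y * (1 + beta * X) * Sym)) = wt i * (Y * (1 + beta * X) * Sym)" unfolding e .
  qed
  thus ?thesis using step3 step4 by (simp add: P_def)
qed


lemma piS_mon: "piS i b d = (\<Sum>k\<le>d. mon (Poly_Mapping.single i (b + d - k) + Poly_Mapping.single (Suc i) (b + k)))
   + (\<Sum>k<d. mon (Poly_Mapping.single 0 1 + (Poly_Mapping.single i (b + d - k) + Poly_Mapping.single (Suc i) (b + k + 1))))"
  unfolding piS_def sum_distrib_left by (simp only: var_pow, simp only: var_mon mon_add)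

lemma keys_piS: assumes "0 < i" shows "Poly_Mapping.keys (piS i b d) \<subseteq> {v. (\<forall>l. l \<noteq> 0 \<and> l \<noteq> i \<and> l \<noteq> Suc i \<longrightarrow> Poly_Mapping.lookup v l = 0)
    \<and> b \<le> Poly_Mapping.lookup v (Suc i) \<and> b \<le> Poly_Mapping.lookup v i \<and> Poly_Mapping.lookup v i \<le> b + d}"
proof -
  let ?K = "{v. (\<forall>l. l \<noteq> 0 \<and> l \<noteq> i \<and> l \<noteq> Suc i \<longrightarrow> Poly_Mapping.lookup v l = 0)
    \<and> b \<le> Poly_Mapping.lookup v (Suc i) \<and> b \<le> Poly_Mapping.lookup v i \<and> Poly_Mapping.lookup v i \<le> b + d}"
  have 1: "Poly_Mapping.keys (\<Sum>k\<le>d. mon (Poly_Mapping.single i (b + d - k) + Poly_Mapping.single (Suc i) (b + k))) \<subseteq> ?K"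
  proof (rule order.trans[OF keys_sum], rule UN_least)
    fix k assume "k \<in> {..d}"
    hence "Poly_Mapping.single i (b + d - k) + Poly_Mapping.single (Suc i) (b + k) \<in> ?K"
      by (simp add: lookup_add lookup_single)
    thus "Poly_Mapping.keys (mon (Poly_Mapping.single i (b + d - k) + Poly_Mapping.single (Suc i) (b + k))) \<subseteq> ?K"
      by simp
  qed
  have 2: "Poly_Mapping.keys (\<Sum>k<d. mon (Poly_Mapping.single 0 1 + (Poly_Mapping.single i (b + d - k) + Poly_Mapping.single (Suc i) (b + k + 1)))) \<subseteq> ?K"
  proof (rule order.trans[OF keys_sum], rule UN_least)
    fix k assume "k \<in> {..<d}"
    hence "Poly_Mapping.single 0 1 + (Poly_Mapping.single i (b + d - k) + Poly_Mapping.single (Suc i) (b + k + 1)) \<in> ?K"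
      using assms by (simp add: lookup_add lookup_single)
    thus "Poly_Mapping.keys (mon (Poly_Mapping.single 0 1 + (Poly_Mapping.single i (b + d - k) + Poly_Mapping.single (Suc i) (b + k + 1)))) \<subseteq> ?K"
      by simp
  qed
  show ?thesis unfolding piS_mon by (rule order.trans[OF keys_add Un_least[OF 1 2]])
qed

lemma filt_zero_keys: "(\<And>v. v \<in> Poly_Mapping.keys f \<Longrightarrow> \<not> P v) \<Longrightarrow> filt P f = 0"
  by (rule poly_mapping_eqI) (auto simp: lookup_filt in_keys_iff)

lemma pi_mon_decomp:
  assumes "0 < i" "Poly_Mapping.lookup m (Suc i) \<le> Poly_Mapping.lookup m i"
  shows "dl_pi i (mon m) = mon (Poly_Mapping.update i 0 (Poly_Mapping.update (Suc i) 0 m))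
      * piS i (Poly_Mapping.lookup m (Suc i)) (Poly_Mapping.lookup m i - Poly_Mapping.lookup m (Suc i))"
proof -
  let ?m0 = "Poly_Mapping.update i 0 (Poly_Mapping.update (Suc i) (0::nat) m)"
  have s0: "swap_var i (mon ?m0) = mon ?m0"
    by (simp add: swap_var_single swap_mon_fix lookup_update)
  have e: "Poly_Mapping.lookup m i = Poly_Mapping.lookup m (Suc i) + (Poly_Mapping.lookup m i - Poly_Mapping.lookup m (Suc i))"
    using assms(2) by simp
  have "mon m = mon ?m0 * (var i ^ (Poly_Mapping.lookup m (Suc i) + (Poly_Mapping.lookup m i - Poly_Mapping.lookup m (Suc i))) * var (Suc i) ^ Poly_Mapping.lookup m (Suc i))"
    using mon_decomp[of m i] e by (simp add: ac_simps)
  thus ?thesis using pi_pow_mult[OF assms(1) s0] by simp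
qed

lemma keys_pi_mon:
  assumes "0 < i" "Poly_Mapping.lookup m (Suc i) \<le> Poly_Mapping.lookup m i"
  shows "Poly_Mapping.keys (dl_pi i (mon m)) \<subseteq> {v. (\<forall>l. l \<noteq> 0 \<and> l \<noteq> i \<and> l \<noteq> Suc i \<longrightarrow> Poly_Mapping.lookup v l = Poly_Mapping.lookup m l)
     \<and> Poly_Mapping.lookup m (Suc i) \<le> Poly_Mapping.lookup v (Suc i)
     \<and> Poly_Mapping.lookup m (Suc i) \<le> Poly_Mapping.lookup v i \<and> Poly_Mapping.lookup v i \<le> Poly_Mapping.lookup m i}"
proof -
  let ?m0 = "Poly_Mapping.update i 0 (Poly_Mapping.update (Suc i) (0::nat) m)"
  let ?b = "Poly_Mapping.lookup m (Suc i)" and ?d = "Poly_Mapping.lookup m i - Poly_Mapping.lookup m (Suc i)"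
  have "Poly_Mapping.keys (dl_pi i (mon m)) \<subseteq> {a + c |a c. a \<in> Poly_Mapping.keys (mon ?m0) \<and> c \<in> Poly_Mapping.keys (piS i ?b ?d)}"
    unfolding pi_mon_decomp[OF assms] by (rule keys_mult)
  also have "\<dots> \<subseteq> {v. (\<forall>l. l \<noteq> 0 \<and> l \<noteq> i \<and> l \<noteq> Suc i \<longrightarrow> Poly_Mapping.lookup v l = Poly_Mapping.lookup m l)
     \<and> Poly_Mapping.lookup m (Suc i) \<le> Poly_Mapping.lookup v (Suc i)
     \<and> Poly_Mapping.lookup m (Suc i) \<le> Poly_Mapping.lookup v i \<and> Poly_Mapping.lookup v i \<le> Poly_Mapping.lookup m i}"
    using keys_piS[OF assms(1), of ?b ?d] assms(2) by (force simp: lookup_add lookup_update)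
  finally show ?thesis .
qed

lemma keys_pi_closed:
  assumes "0 < i" "Poly_Mapping.keys f \<subseteq> S"
    and "\<And>m. m \<in> S \<Longrightarrow> Poly_Mapping.keys (dl_pi i (mon m)) \<subseteq> T"
  shows "Poly_Mapping.keys (dl_pi i f) \<subseteq> T"
proof (rule frag_induction[of f S, OF assms(2)])
  fix a b assume "Poly_Mapping.keys (dl_pi i a) \<subseteq> T" "Poly_Mapping.keys (dl_pi i b) \<subseteq> T"
  thus "Poly_Mapping.keys (dl_pi i (a - b)) \<subseteq> T" using keys_diff[of "dl_pi i a" "dl_pi i b"] by auto
qed (use assms(3) in auto)


lemma prod_mon: "finite A \<Longrightarrow> (\<Prod>k\<in>A. mon (f k)) = mon (sum f A)"
  by (induction A rule: finite_induct) (simp_all add: mon_add)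

lemma inv_G:
  assumes lamdec: "\<forall>j\<in>{1..<n}. lam (Suc j) \<le> lam j"
    and L: "\<And>l. 1 \<le> l \<Longrightarrow> l \<le> n \<Longrightarrow> Poly_Mapping.lookup L l = lam l"
  shows "k + 2 \<le> n \<Longrightarrow> Poly_Mapping.keys (cyc k (mon L)) \<subseteq> {v. (\<forall>l. k + 2 \<le> l \<longrightarrow> Poly_Mapping.lookup v l = Poly_Mapping.lookup L l)
      \<and> Poly_Mapping.lookup L (Suc k) \<le> Poly_Mapping.lookup v (Suc k)}"
proof (induction k)
  case 0 then show ?case by simp
next
  case (Suc k)
  have IH: "Poly_Mapping.keys (cyc k (mon L)) \<subseteq> {v. (\<forall>l. k + 2 \<le> l \<longrightarrow> Poly_Mapping.lookup v l = Poly_Mapping.lookup L l)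
      \<and> Poly_Mapping.lookup L (Suc k) \<le> Poly_Mapping.lookup v (Suc k)}" using Suc by simp
  have dec: "Poly_Mapping.lookup L (Suc (Suc k)) \<le> Poly_Mapping.lookup L (Suc k)"
    using Suc.prems lamdec L[of "Suc k"] L[of "Suc (Suc k)"] by auto
  show ?case unfolding cyc_Suc
  proof (rule keys_pi_closed[OF _ IH])
    fix m assume m: "m \<in> {v. (\<forall>l. k + 2 \<le> l \<longrightarrow> Poly_Mapping.lookup v l = Poly_Mapping.lookup L l)
      \<and> Poly_Mapping.lookup L (Suc k) \<le> Poly_Mapping.lookup v (Suc k)}"
    hence m2: "Poly_Mapping.lookup m (Suc (Suc k)) = Poly_Mapping.lookup L (Suc (Suc k))" by simp
    have "Poly_Mapping.lookup m (Suc (Suc k)) \<le> Poly_Mapping.lookup m (Suc k)" using m m2 dec by simp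
    from keys_pi_mon[OF _ this]
    show "Poly_Mapping.keys (dl_pi (Suc k) (mon m)) \<subseteq> {v. (\<forall>l. Suc k + 2 \<le> l \<longrightarrow> Poly_Mapping.lookup v l = Poly_Mapping.lookup L l)
      \<and> Poly_Mapping.lookup L (Suc (Suc k)) \<le> Poly_Mapping.lookup v (Suc (Suc k))}"
      using m m2 by force
  qed simp
qed

lemma pi_dl_word_comm: "0 < i \<Longrightarrow> (\<forall>k\<in>set ws. Suc i < k) \<Longrightarrow> dl_pi i (dl_word ws f) = dl_word ws (dl_pi i f)"
  by (induction ws) (auto simp: pi_comm)

lemma cyc_split: "j \<le> k \<Longrightarrow> cyc k f = dl_word (rev [Suc j..<Suc k]) (cyc j f)"
proof -
  assume "j \<le> k"
  hence e: "Suc j + (k - j) = Suc k" by simp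
  have "[1..<Suc j + (k - j)] = [1..<Suc j] @ [Suc j..<Suc j + (k - j)]" by (rule upt_add_eq_append) simp
  hence "[1..<Suc k] = [1..<Suc j] @ [Suc j..<Suc k]" unfolding e .
  thus ?thesis by (simp add: cyc_def dl_word_append)
qed


theorem lemma5p5:
  fixes n :: nat and lam :: "nat \<Rightarrow> nat"
  assumes "n \<ge> 2"
    and "\<forall>j \<in> {1..<n}. lam (Suc j) \<le> lam j"
  shows "dl_word (w0_word n) (nonalt_part n lam (dl_word (c_word (n - 1)) (xmon n lam))) = 0"
proof -
  note lamdec = assms(2)
  define L :: "nat \<Rightarrow>\<^sub>0 nat" where "L = (\<Sum>k\<in>{1..n}. Poly_Mapping.single k (lam k))"
  have lkL: "Poly_Mapping.lookup L l = lam l" if "1 \<le> l" "l \<le> n" for l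
    using that unfolding L_def by (simp add: lookup_sum lookup_single when_def)
  have xm: "xmon n lam = mon L" unfolding xmon_def L_def by (simp add: var_pow prod_mon)
  define x where "x = mon L"
  define G where "G = cyc (n - 1) x"
  have Gd: "dl_word (c_word (n - 1)) (xmon n lam) = G" by (simp add: c_word_def cyc_def G_def xm x_def)
  define OK where "OK k m \<longleftrightarrow> lam (Suc k) \<le> Poly_Mapping.lookup m k \<and> Poly_Mapping.lookup m k \<le> lam k" for k m
  define A where "A j m \<longleftrightarrow> (\<forall>k\<in>{Suc j..<n}. OK k m)" for j m
  define T where "T j = filt (\<lambda>m. A j m \<and> \<not> OK j m) G" for j
  have decomp: "nonalt_part n lam G = (\<Sum>j\<in>{1..<n}. T j)"
  proof (rule poly_mapping_eqI)
    fix m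
    have fin: "finite {m. (if alternating n lam m then 0 else Poly_Mapping.lookup G m) \<noteq> 0}"
      by (rule finite_subset[OF _ finite_keys[of G]]) (auto simp: in_keys_iff)
    have lhs: "Poly_Mapping.lookup (nonalt_part n lam G) m = (if alternating n lam m then 0 else Poly_Mapping.lookup G m)"
      unfolding nonalt_part_def lookup_Abs_poly_mapping[OF fin] ..
    have rhs: "Poly_Mapping.lookup (\<Sum>j\<in>{1..<n}. T j) m = (\<Sum>j\<in>{1..<n}. if A j m \<and> \<not> OK j m then Poly_Mapping.lookup G m else 0)"
      by (simp add: lookup_sum T_def lookup_filt)
    have alt: "alternating n lam m \<longleftrightarrow> (\<forall>j\<in>{1..<n}. OK j m)" by (simp add: alternating_def OK_def)
    show "Poly_Mapping.lookup (nonalt_part n lam G) m = Poly_Mapping.lookup (\<Sum>j\<in>{1..<n}. T j) m"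
    proof (cases "alternating n lam m")
      case True
      then show ?thesis unfolding lhs rhs using alt by simp
    next
      case False
      define J where "J = Max {j\<in>{1..<n}. \<not> OK j m}"
      have ne: "{j\<in>{1..<n}. \<not> OK j m} \<noteq> {}" using False alt by auto
      have fin2: "finite {j\<in>{1..<n}. \<not> OK j m}" by simp
      have J: "J \<in> {1..<n}" "\<not> OK J m" using Max_in[OF fin2 ne] unfolding J_def by auto
      have Jmax: "j \<le> J" if "j \<in> {1..<n}" "\<not> OK j m" for j
        using Max_ge[OF fin2] that unfolding J_def by auto
      have iff: "(A j m \<and> \<not> OK j m) \<longleftrightarrow> j = J" if "j \<in> {1..<n}" for j
      proof
        assume a: "A j m \<and> \<not> OK j m"
        hence "j \<le> J" using Jmax that by blast
        moreover have "\<not> j < J"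
        proof
          assume "j < J"
          hence "J \<in> {Suc j..<n}" using J by auto
          thus False using a J unfolding A_def by blast
        qed
        ultimately show "j = J" by simp
      next
        assume "j = J"
        moreover have "A J m" unfolding A_def
        proof
          fix k assume k: "k \<in> {Suc J..<n}"
          show "OK k m"
          proof (rule ccontr)
            assume "\<not> OK k m"
            hence "k \<le> J" using Jmax k J by auto
            thus False using k by simp
          qed
        qed
        ultimately show "A j m \<and> \<not> OK j m" using J by simp
      qed
      have "(\<Sum>j\<in>{1..<n}. if A j m \<and> \<not> OK j m then Poly_Mapping.lookup G m else 0) = (\<Sum>j\<in>{1..<n}. if j = J then Poly_Mapping.lookup G m else 0)"
        by (rule sum.cong[OF refl]) (simp add: iff)
      also have "\<dots> = Poly_Mapping.lookup G m" using J by simp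
      finally show ?thesis unfolding lhs rhs using False by simp
    qed
  qed
  have kill: "dl_word (w0_word n) (T j) = 0" if j: "j \<in> {1..<n}" for j
  proof -
    have dB: "dep {j} (\<lambda>m. \<not> OK j m)" unfolding dep_def OK_def by simp
    have dA: "dep {Suc j..<n} (A j)" unfolding dep_def A_def OK_def by simp
    define ws where "ws = rev [Suc j..<n]"
    have Gs: "G = dl_word ws (cyc j x)"
    proof -
      have e: "Suc (n - 1) = n" using assms(1) by simp
      have "j \<le> n - 1" using j by auto
      from cyc_split[OF this, of x] show ?thesis unfolding e G_def ws_def .
    qed
    have ws_ge: "\<forall>k\<in>set ws. Suc j \<le> k" by (simp add: ws_def)
    have TB: "T j = filt (A j) (dl_word ws (filt (\<lambda>m. \<not> OK j m) (cyc j x)))"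
    proof -
      have "filt (\<lambda>m. \<not> OK j m) (dl_word ws (cyc j x)) = dl_word ws (filt (\<lambda>m. \<not> OK j m) (cyc j x))"
      proof (rule filt_dl_word)
        fix k g assume "k \<in> set ws"
        hence "Suc j \<le> k" using ws_ge by blast
        thus "filt (\<lambda>m. \<not> OK j m) (dl_pi k g) = dl_pi k (filt (\<lambda>m. \<not> OK j m) g)"
          using j by (intro filt_pi[OF dB]) auto
      qed
      thus ?thesis unfolding T_def Gs by (simp add: filt_and)
    qed
    show ?thesis
    proof (cases "j = 1")
      case True
      have "filt (\<lambda>m. \<not> OK j m) (cyc j x) = 0"
      proof (rule filt_zero_keys)
        fix v assume v: "v \<in> Poly_Mapping.keys (cyc j x)"
        have L12: "Poly_Mapping.lookup L 1 = lam 1" "Poly_Mapping.lookup L 2 = lam 2" using assms(1) lkL by auto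
        have d12: "lam 2 \<le> lam 1" using lamdec assms(1) by (auto simp: numeral_2_eq_2)
        have "cyc j x = dl_pi 1 (mon L)" using True by (simp add: cyc_Suc x_def)
        moreover have "Poly_Mapping.lookup L (Suc 1) \<le> Poly_Mapping.lookup L 1" using L12 d12 by (simp add: numeral_2_eq_2)
        ultimately have "v \<in> {v. (\<forall>l. l \<noteq> 0 \<and> l \<noteq> 1 \<and> l \<noteq> Suc 1 \<longrightarrow> Poly_Mapping.lookup v l = Poly_Mapping.lookup L l)
           \<and> Poly_Mapping.lookup L (Suc 1) \<le> Poly_Mapping.lookup v (Suc 1)
           \<and> Poly_Mapping.lookup L (Suc 1) \<le> Poly_Mapping.lookup v 1 \<and> Poly_Mapping.lookup v 1 \<le> Poly_Mapping.lookup L 1}"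
          using keys_pi_mon[of 1 L] v by auto
        thus "\<not> \<not> OK j v" using True L12 by (simp add: OK_def numeral_2_eq_2)
      qed
      thus ?thesis unfolding TB by simp
    next
      case False
      then obtain i where i: "j = Suc i" "0 < i" using j by (cases j) auto
      have i_le: "i \<le> n - 2" using j i by auto
      obtain i' where i': "i = Suc i'" using i by (cases i) auto
      have dec2: "lam (Suc (Suc i)) \<le> lam (Suc i)" using lamdec j i by auto
      have dec1: "lam (Suc i) \<le> lam i" using lamdec j i by auto
      have K: "dl_pi i (filt (\<lambda>m. \<not> OK j m) (cyc j x)) = 0"
      proof -
        have cj: "cyc j x = dl_pi (Suc i) (dl_pi i (cyc i' x))" using i i' by (simp add: cyc_Suc)
        let ?S = "{m. Poly_Mapping.lookup m (Suc i) = lam (Suc i) \<and> Poly_Mapping.lookup m (Suc (Suc i)) = lam (Suc (Suc i)) \<and> lam (Suc i) \<le> Poly_Mapping.lookup m i}"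
        have keysS: "Poly_Mapping.keys (cyc i' x) \<subseteq> ?S"
        proof -
          have "Poly_Mapping.keys (cyc i' x) \<subseteq> {v. (\<forall>l. i' + 2 \<le> l \<longrightarrow> Poly_Mapping.lookup v l = Poly_Mapping.lookup L l)
               \<and> Poly_Mapping.lookup L (Suc i') \<le> Poly_Mapping.lookup v (Suc i')}"
            unfolding x_def by (rule inv_G[OF lamdec lkL]) (use j i i' in auto)
          moreover have "Poly_Mapping.lookup L (Suc i) = lam (Suc i)" "Poly_Mapping.lookup L (Suc (Suc i)) = lam (Suc (Suc i))"
            "Poly_Mapping.lookup L i = lam i" using lkL j i by auto
          ultimately show ?thesis using i' dec1 by force
        qed
        have OKe: "(\<lambda>m. \<not> OK j m) = (\<lambda>m'. \<not> (lam (Suc (Suc i)) \<le> Poly_Mapping.lookup m' (Suc i) \<and> Poly_Mapping.lookup m' (Suc i) \<le> lam (Suc (Suc i)) + (lam (Suc i) - lam (Suc (Suc i)))))"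
          using dec2 i by (auto simp: OK_def fun_eq_iff)
        show ?thesis unfolding cj OKe
        proof (rule frag_induction[OF keysS])
          fix m assume m: "m \<in> ?S"
          show "dl_pi i (filt (\<lambda>m'. \<not> (lam (Suc (Suc i)) \<le> Poly_Mapping.lookup m' (Suc i) \<and> Poly_Mapping.lookup m' (Suc i) \<le> lam (Suc (Suc i)) + (lam (Suc i) - lam (Suc (Suc i)))))
              (dl_pi (Suc i) (dl_pi i (frag_of m)))) = 0"
            by (rule lemmaK[where d="Poly_Mapping.lookup m i - lam (Suc i)"]) (use m i dec2 in auto)
        qed simp_all
      qed
      have "dl_pi i (T j) = 0"
      proof -
        have "dl_pi i (T j) = filt (A j) (dl_pi i (dl_word ws (filt (\<lambda>m. \<not> OK j m) (cyc j x))))"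
          unfolding TB using i by (intro filt_pi[OF dA, symmetric]) auto
        also have "\<dots> = filt (A j) (dl_word ws (dl_pi i (filt (\<lambda>m. \<not> OK j m) (cyc j x))))"
          using ws_ge i by (subst pi_dl_word_comm) auto
        also have "\<dots> = 0" unfolding K by simp
        finally show ?thesis .
      qed
      thus ?thesis using Wd_kill[of i "n - 2" "T j"] i i_le w0_Wd[OF assms(1)] by simp
    qed
  qed
  show ?thesis unfolding Gd decomp dl_word_sum using kill by simp
qed

end
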